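(* In the algebra $\mathcal O_q$ defined in the context, for all $n\in\mathbb N$: $$\mathcal W_{n+1}=-(q-q^{-1})^{-1}\sum_{k=0}^n\sum_{\ell=0}^k\binom{k}{\ell}q^{2\ell-k}[2]_q^{-k-2}\mathcal G_{n-k}\tilde B_{(k-2\ell)\delta+\alpha_0},$$ $$\mathcal W_{-n}=-(q-q^{-1})^{-1}\sum_{k=0}^n\sum_{\ell=0}^k\binom{k}{\ell}q^{k-2\ell}[2]_q^{-k-2}\mathcal G_{n-k}\tilde B_{(k-2\ell)\delta+\alpha_1}.$$
   Context: All algebras are associative and unital over a field $\mathbb F$; $q\in\mathbb F$ is nonzero and not a root of unity; $[n]_q=(q^n-q^{-n})/(q-q^{-1})$. For elements $X,Y$ of an algebra, $[X,Y]=XY-YX$ and $[X,Y]_q=qXY-q^{-1}YX$. Let $\rho=-(q^2-q^{-2})^2$. The algebra $\mathcal O_q$ is defined by generators $\mathcal W_{-k},\mathcal W_{k+1},\mathcal G_{k+1},\tilde{\mathcal G}_{k+1}$ ($k\in\mathbb N$) and the following relations for all $k,\ell\in\mathbb N$: $[\mathcal W_0,\mathcal W_{k+1}]=[\mathcal W_{-k},\mathcal W_1]=(\tilde{\mathcal G}_{k+1}-\mathcal G_{k+1})/(q+q^{-1})$; $[\mathcal W_0,\mathcal G_{k+1}]_q=[\tilde{\mathcal G}_{k+1},\mathcal W_0]_q=\rho\mathcal W_{-k-1}-\rho\mathcal W_{k+1}$; $[\mathcal G_{k+1},\mathcal W_1]_q=[\mathcal W_1,\tilde{\mathcal G}_{k+1}]_q=\rho\mathcal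 W_{k+2}-\rho\mathcal W_{-k}$; $[\mathcal W_{-k},\mathcal W_{-\ell}]=0$, $[\mathcal W_{k+1},\mathcal W_{\ell+1}]=0$; $[\mathcal W_{-k},\mathcal W_{\ell+1}]+[\mathcal W_{k+1},\mathcal W_{-\ell}]=0$; $[\mathcal W_{-k},\mathcal G_{\ell+1}]+[\mathcal G_{k+1},\mathcal W_{-\ell}]=0$; $[\mathcal W_{-k},\tilde{\mathcal G}_{\ell+1}]+[\tilde{\mathcal G}_{k+1},\mathcal W_{-\ell}]=0$; $[\mathcal W_{k+1},\mathcal G_{\ell+1}]+[\mathcal G_{k+1},\mathcal W_{\ell+1}]=0$; $[\mathcal W_{k+1},\tilde{\mathcal G}_{\ell+1}]+[\tilde{\mathcal G}_{k+1},\mathcal W_{\ell+1}]=0$; $[\mathcal G_{k+1},\mathcal G_{\ell+1}]=0$, $[\tilde{\mathcal G}_{k+1},\tilde{\mathcal G}_{\ell+1}]=0$; $[\tilde{\mathcal G}_{k+1},\mathcal G_{\ell+1}]+[\mathcal G_{k+1},\tilde{\mathcal G}_{\ell+1}]=0$. Convention: $\mathcal G_0=-(q-q^{-1})[2]_q^2$. Define $\tilde B_\delta=q^{-2}\mathcal W_0\mathcal W_1-\mathcal W_1\mathcal W_0$; $\tilde B_{\alpha_0}=\mathcal W_1$, $\tilde B_{\delta+\alpha_0}=\mathcal W_0+\frac{q[\tilde B_\delta,\mathcal W_1]}{(q-q^{-1})(q^2-q^{-2})}$, $\tilde B_{n\delta+\alpha_0}=\tilde B_{(n-2)\delta+\alpha_0}+\frac{q[\tilde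 B_\delta,\tilde B_{(n-1)\delta+\alpha_0}]}{(q-q^{-1})(q^2-q^{-2})}$ for $n\ge2$; $\tilde B_{\alpha_1}=\mathcal W_0$, $\tilde B_{\delta+\alpha_1}=\mathcal W_1-\frac{q[\tilde B_\delta,\mathcal W_0]}{(q-q^{-1})(q^2-q^{-2})}$, $\tilde B_{n\delta+\alpha_1}=\tilde B_{(n-2)\delta+\alpha_1}-\frac{q[\tilde B_\delta,\tilde B_{(n-1)\delta+\alpha_1}]}{(q-q^{-1})(q^2-q^{-2})}$ for $n\ge2$. For negative integers $k$, set $\tilde B_{k\delta+\alpha_0}=\tilde B_{(-k-1)\delta+\alpha_1}$ and $\tilde B_{k\delta+\alpha_1}=\tilde B_{(-k-1)\delta+\alpha_0}$. *)

theory Defs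
  imports Main
begin

text \<open>An associative unital algebra over a field 'f is modelled as a ring 'a together
with a unital ring homomorphism phi : 'f -> 'a with central image (the structure map).\<close>

definition alg_map :: "('f::field \<Rightarrow> 'a::ring_1) \<Rightarrow> bool" where
  "alg_map phi \<longleftrightarrow> phi 1 = 1 \<and> (\<forall>a b. phi (a + b) = phi a + phi b)
     \<and> (\<forall>a b. phi (a * b) = phi a * phi b) \<and> (\<forall>c x. phi c * x = x * phi c)"

definition not_root_of_unity :: "'f::field \<Rightarrow> bool" where
  "not_root_of_unity q \<longleftrightarrow> q \<noteq> 0 \<and> (\<forall>n::nat. n > 0 \<longrightarrow> q ^ n \<noteq> 1)"

definition qint :: "'f::field \<Rightarrow> int \<Rightarrow> 'f" where
  "qint q n = (q powi n - q powi (-n)) / (q - inverse q)"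

definition comm :: "'a::ring \<Rightarrow> 'a \<Rightarrow> 'a" where
  "comm X Y = X * Y - Y * X"

definition qcomm :: "('f::field \<Rightarrow> 'a::ring_1) \<Rightarrow> 'f \<Rightarrow> 'a \<Rightarrow> 'a \<Rightarrow> 'a" where
  "qcomm phi q X Y = phi q * X * Y - phi (inverse q) * Y * X"

definition rho :: "'f::field \<Rightarrow> 'f" where
  "rho q = - ((q^2 - inverse (q^2))^2)"

text \<open>Defining relations of O_q. Generators: W (- k) = W_{-k}, W (k+1) = W_{k+1},
  G (k+1) = G_{k+1}, Gt (k+1) = tilde G_{k+1}, for k in N (values G 0, Gt 0 are irrelevant).\<close>

definition Oq_rels :: "('f::field \<Rightarrow> 'a::ring_1) \<Rightarrow> 'f \<Rightarrow> (int \<Rightarrow> 'a) \<Rightarrow> (nat \<Rightarrow> 'a) \<Rightarrow> (nat \<Rightarrow> 'a) \<Rightarrow> bool" where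
  "Oq_rels phi q W G Gt \<longleftrightarrow> (\<forall>k l :: nat.
     comm (W 0) (W (int k + 1)) = phi (inverse (q + inverse q)) * (Gt (k+1) - G (k+1)) \<and>
     comm (W (- int k)) (W 1) = phi (inverse (q + inverse q)) * (Gt (k+1) - G (k+1)) \<and>
     qcomm phi q (W 0) (G (k+1)) = phi (rho q) * W (- int k - 1) - phi (rho q) * W (int k + 1) \<and>
     qcomm phi q (Gt (k+1)) (W 0) = phi (rho q) * W (- int k - 1) - phi (rho q) * W (int k + 1) \<and>
     qcomm phi q (G (k+1)) (W 1) = phi (rho q) * W (int k + 2) - phi (rho q) * W (- int k) \<and>
     qcomm phi q (W 1) (Gt (k+1)) = phi (rho q) * W (int k + 2) - phi (rho q) * W (- int k) \<and>
     comm (W (- int k)) (W (- int l)) = 0 \<and>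
     comm (W (int k + 1)) (W (int l + 1)) = 0 \<and>
     comm (W (- int k)) (W (int l + 1)) + comm (W (int k + 1)) (W (- int l)) = 0 \<and>
     comm (W (- int k)) (G (l+1)) + comm (G (k+1)) (W (- int l)) = 0 \<and>
     comm (W (- int k)) (Gt (l+1)) + comm (Gt (k+1)) (W (- int l)) = 0 \<and>
     comm (W (int k + 1)) (G (l+1)) + comm (G (k+1)) (W (int l + 1)) = 0 \<and>
     comm (W (int k + 1)) (Gt (l+1)) + comm (Gt (k+1)) (W (int l + 1)) = 0 \<and>
     comm (G (k+1)) (G (l+1)) = 0 \<and>
     comm (Gt (k+1)) (Gt (l+1)) = 0 \<and>
     comm (Gt (k+1)) (G (l+1)) + comm (G (k+1)) (Gt (l+1)) = 0)"

definition Gconv :: "('f::field \<Rightarrow> 'a::ring_1) \<Rightarrow> 'f \<Rightarrow> (nat \<Rightarrow> 'a) \<Rightarrow> nat \<Rightarrow> 'a" where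
  "Gconv phi q G n = (if n = 0 then phi (- (q - inverse q) * (qint q 2)^2) else G n)"

definition Bdelta :: "('f::field \<Rightarrow> 'a::ring_1) \<Rightarrow> 'f \<Rightarrow> 'a \<Rightarrow> 'a \<Rightarrow> 'a" where
  "Bdelta phi q W0 W1 = phi (inverse (q^2)) * W0 * W1 - W1 * W0"

definition Bcoef :: "'f::field \<Rightarrow> 'f" where
  "Bcoef q = q / ((q - inverse q) * (q^2 - inverse (q^2)))"

text \<open>Ba0 n = tilde B_{n delta + alpha_0}, Ba1 n = tilde B_{n delta + alpha_1} for n in N.\<close>
fun Ba0 :: "('f::field \<Rightarrow> 'a::ring_1) \<Rightarrow> 'f \<Rightarrow> 'a \<Rightarrow> 'a \<Rightarrow> nat \<Rightarrow> 'a" where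
  "Ba0 phi q W0 W1 0 = W1"
| "Ba0 phi q W0 W1 (Suc 0) = W0 + phi (Bcoef q) * comm (Bdelta phi q W0 W1) W1"
| "Ba0 phi q W0 W1 (Suc (Suc n)) = Ba0 phi q W0 W1 n
     + phi (Bcoef q) * comm (Bdelta phi q W0 W1) (Ba0 phi q W0 W1 (Suc n))"

fun Ba1 :: "('f::field \<Rightarrow> 'a::ring_1) \<Rightarrow> 'f \<Rightarrow> 'a \<Rightarrow> 'a \<Rightarrow> nat \<Rightarrow> 'a" where
  "Ba1 phi q W0 W1 0 = W0"
| "Ba1 phi q W0 W1 (Suc 0) = W1 - phi (Bcoef q) * comm (Bdelta phi q W0 W1) W0"
| "Ba1 phi q W0 W1 (Suc (Suc n)) = Ba1 phi q W0 W1 n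
     - phi (Bcoef q) * comm (Bdelta phi q W0 W1) (Ba1 phi q W0 W1 (Suc n))"

text \<open>Integer-indexed: Bt0 k = tilde B_{k delta + alpha_0}, Bt1 k = tilde B_{k delta + alpha_1},
  with tilde B_{k delta+alpha_0} = tilde B_{(-k-1) delta + alpha_1} for k < 0 and vice versa.\<close>
definition Bt0 :: "('f::field \<Rightarrow> 'a::ring_1) \<Rightarrow> 'f \<Rightarrow> 'a \<Rightarrow> 'a \<Rightarrow> int \<Rightarrow> 'a" where
  "Bt0 phi q W0 W1 k = (if k \<ge> 0 then Ba0 phi q W0 W1 (nat k) else Ba1 phi q W0 W1 (nat (- k - 1)))"

definition Bt1 :: "('f::field \<Rightarrow> 'a::ring_1) \<Rightarrow> 'f \<Rightarrow> 'a \<Rightarrow> 'a \<Rightarrow> int \<Rightarrow> 'a" where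
  "Bt1 phi q W0 W1 k = (if k \<ge> 0 then Ba1 phi q W0 W1 (nat k) else Ba0 phi q W0 W1 (nat (- k - 1)))"

end

theory Submission imports Defs begin

locale oq =
  fixes phi :: "'f::field \<Rightarrow> 'a::ring_1" and q :: 'f
    and W :: "int \<Rightarrow> 'a" and G Gt :: "nat \<Rightarrow> 'a"
  assumes am: "alg_map phi" and nr: "not_root_of_unity q" and rel: "Oq_rels phi q W G Gt"
begin

lemma phi1[simp]: "phi 1 = 1" using am unfolding alg_map_def by blast
lemma phi_add[simp]: "phi (a + b) = phi a + phi b" using am unfolding alg_map_def by blast
lemma phi_mult: "phi (a * b) = phi a * phi b" using am unfolding alg_map_def by blast
lemma phi_central: "phi c * x = x * phi c" using am unfolding alg_map_def by blast
lemma phi0[simp]: "phi 0 = 0"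
proof -
  have "phi 0 = phi 0 + phi 0" using phi_add[of 0 0] by simp
  then show ?thesis by simp
qed
lemma phi_minus[simp]: "phi (- a) = - phi a"
proof -
  have "phi a + phi (- a) = 0" using phi_add[of a "-a"] by simp
  then show ?thesis using minus_unique by metis
qed
lemma phi_diff[simp]: "phi (a - b) = phi a - phi b"
  using phi_add[of a "-b"] by simp

lemma pm1[simp]: "phi a * phi b = phi (a * b)" by (simp add: phi_mult)
lemma pm2[simp]: "phi a * (phi b * x) = phi (a * b) * x" by (simp only: phi_mult mult.assoc)
lemma pc1[simp]: "NO_MATCH (phi d) x \<Longrightarrow> x * phi c = phi c * x" by (rule phi_central[symmetric])
lemma pc2[simp]: "NO_MATCH (phi d) x \<Longrightarrow> x * (phi c * y) = phi c * (x * y)"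
  by (simp only: mult.assoc[symmetric] phi_central[of c x])

lemma q0: "q \<noteq> 0" using nr by (simp add: not_root_of_unity_def)
lemma qsq: "q^2 \<noteq> 1" using nr unfolding not_root_of_unity_def by (metis zero_less_numeral)
lemma q4: "q^4 \<noteq> 1" using nr unfolding not_root_of_unity_def by (metis zero_less_numeral)

lemma qi1[simp]: "q * inverse q = 1" "inverse q * q = 1" "q * (inverse q * z) = z" "inverse q * (q * z) = z"
  using q0 by (auto simp: mult.assoc[symmetric])
lemmas nf = distrib_left distrib_right left_diff_distrib right_diff_distrib mult.assoc mult_ac

lemma c0nz: "q - inverse q \<noteq> 0"
proof
  assume "q - inverse q = 0"
  then have "q * q = q * inverse q" by simp
  then have "q^2 = 1" using q0 by (simp add: power2_eq_square)
  with qsq show False by simp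
qed

lemma bnz: "q + inverse q \<noteq> 0"
proof
  assume h: "q + inverse q = 0"
  have "q * (q + inverse q) = q * q + 1" using q0 by (simp add: distrib_left)
  then have "q * q = -1" using h by (simp add: eq_neg_iff_add_eq_0)
  then have "q^4 = 1" by (metis power2_eq_square power_mult numeral_times_numeral semiring_norm(12) mult_minus_left mult_1 minus_minus num_double power2_minus)
  with q4 show False by simp
qed

lemma cancel: "x \<noteq> 0 \<Longrightarrow> phi x * A = phi x * B \<Longrightarrow> A = B"
  by (metis pm2 right_inverse phi1 mult_1 mult.commute left_inverse)

lemma qint2: "qint q 2 = q + inverse q"
  using q0 c0nz by (simp add: qint_def power_int_minus field_simps power2_eq_square)


abbreviation "bb \<equiv> q + inverse q"
abbreviation "cc \<equiv> q - inverse q"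

lemmas Rall = rel[unfolded Oq_rels_def, rule_format]

lemma R1: "comm (W 0) (W (int k + 1)) = phi (inverse bb) * (Gt (k+1) - G (k+1))"
  using Rall[of k l] by blast
lemma R2: "comm (W (- int k)) (W 1) = phi (inverse bb) * (Gt (k+1) - G (k+1))"
  using Rall[of k l] by blast
lemma R3: "qcomm phi q (W 0) (G (k+1)) = phi (rho q) * W (- int k - 1) - phi (rho q) * W (int k + 1)"
  using Rall[of k l] by blast
lemma R4: "qcomm phi q (Gt (k+1)) (W 0) = phi (rho q) * W (- int k - 1) - phi (rho q) * W (int k + 1)"
  using Rall[of k l] by blast
lemma R5: "qcomm phi q (G (k+1)) (W 1) = phi (rho q) * W (int k + 2) - phi (rho q) * W (- int k)"
  using Rall[of k l] by blast
lemma R6: "qcomm phi q (W 1) (Gt (k+1)) = phi (rho q) * W (int k + 2) - phi (rho q) * W (- int k)"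
  using Rall[of k l] by blast
lemma R7: "comm (W (- int k)) (W (- int l)) = 0"
  using Rall[of k l] by blast
lemma R8: "comm (W (int k + 1)) (W (int l + 1)) = 0"
  using Rall[of k l] by blast

lemma Gt_eq: "Gt (k+1) = G (k+1) + phi bb * comm (W (- int k)) (W 1)"
proof -
  have "phi bb * comm (W (- int k)) (W 1) = phi (bb * inverse bb) * (Gt (k+1) - G (k+1))"
    by (simp only: R2 pm2)
  also have "\<dots> = Gt (k+1) - G (k+1)" using bnz by simp
  finally show ?thesis by simp
qed

lemma F_eq: "comm (W 0) (W (int k + 1)) = comm (W (- int k)) (W 1)"
  by (simp add: R1 R2)

lemma gen_GW1:
  assumes gt: "gt = g + phi bb * f" and e5: "qcomm phi q g w = R" and e6: "qcomm phi q w gt = R"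
  shows "phi cc * (g * w) = R - w * f + phi (inverse q * inverse q) * (f * w)"
proof -
  have "phi bb * (phi cc * (g * w)) = phi q * qcomm phi q g w + phi (inverse q) * qcomm phi q w gt
     - phi bb * (w * f - phi (inverse q * inverse q) * (f * w))"
    unfolding gt qcomm_def by (simp add: nf)
  also have "\<dots> = phi bb * (R - w * f + phi (inverse q * inverse q) * (f * w))"
    unfolding e5 e6 by (simp add: nf)
  finally show ?thesis using bnz cancel by blast
qed

lemma gen_GW0:
  assumes gt: "gt = g + phi bb * f" and e3: "qcomm phi q w g = R" and e4: "qcomm phi q gt w = R"
  shows "phi cc * (g * w) = R - phi (q * q) * (f * w) + w * f"
proof -
  have "phi bb * (phi cc * (g * w)) = phi (inverse q) * qcomm phi q w g + phi q * qcomm phi q gt w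
     - phi bb * (phi (q * q) * (f * w) - w * f)"
    unfolding gt qcomm_def by (simp add: nf)
  also have "\<dots> = phi bb * (R - phi (q * q) * (f * w) + w * f)"
    unfolding e3 e4 by (simp add: nf)
  finally show ?thesis using bnz cancel by blast
qed

lemma gen_DG:
  "phi q * ((phi (inverse q * inverse q) * w0 * w1 - w1 * w0) * g - g * (phi (inverse q * inverse q) * w0 * w1 - w1 * w0))
   = (r' * w1 - w1 * r') - (w0 * r - r * w0)
     + (qcomm phi q w0 g - r') * w1 - w1 * (qcomm phi q w0 g - r')
     - w0 * (qcomm phi q g w1 - r) + (qcomm phi q g w1 - r) * w0"
  unfolding qcomm_def by (simp add: nf)


lemma GW1: "phi cc * (G (k+1) * W 1) = phi (rho q) * W (int k + 2) - phi (rho q) * W (- int k)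
   - W 1 * comm (W (- int k)) (W 1) + phi (inverse q * inverse q) * (comm (W (- int k)) (W 1) * W 1)"
  by (rule gen_GW1[OF Gt_eq R5 R6])

lemma GW0: "phi cc * (G (k+1) * W 0) = phi (rho q) * W (- int k - 1) - phi (rho q) * W (int k + 1)
   - phi (q * q) * (comm (W (- int k)) (W 1) * W 0) + W 0 * comm (W (- int k)) (W 1)"
  by (rule gen_GW0[OF Gt_eq R3 R4])

lemma invq2: "inverse (q^2) = inverse q * inverse q"
  by (simp add: power2_eq_square)

abbreviation "DD \<equiv> Bdelta phi q (W 0) (W 1)"

lemma gen_rr: "((phi r * a - phi r * b) * w1 - w1 * (phi r * a - phi r * b))
   - (w0 * (phi r * c - phi r * d) - (phi r * c - phi r * d) * w0)
   = phi r * (comm a w1 - comm b w1 - comm w0 c + comm w0 d)"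
  unfolding comm_def by (simp add: nf)

lemma DG: "comm DD (G (k+1)) = 0"
proof -
  have i1: "int (k+1) + 1 = int k + 2" "- int (k+1) = - int k - 1" by simp_all
  have a: "comm (W (- int k - 1)) (W 1) = comm (W 0) (W (int k + 2))"
    using F_eq[of "k+1"] unfolding i1 by simp
  have b: "comm (W (int k + 1)) (W 1) = 0" using R8[of k 0] by simp
  have d: "comm (W 0) (W (- int k)) = 0" using R7[of 0 k] by simp
  let ?r' = "phi (rho q) * W (- int k - 1) - phi (rho q) * W (int k + 1)"
  let ?r = "phi (rho q) * W (int k + 2) - phi (rho q) * W (- int k)"
  have "phi q * comm DD (G (k+1)) = (?r' * W 1 - W 1 * ?r') - (W 0 * ?r - ?r * W 0)
     + (qcomm phi q (W 0) (G (k+1)) - ?r') * W 1 - W 1 * (qcomm phi q (W 0) (G (k+1)) - ?r')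
     - W 0 * (qcomm phi q (G (k+1)) (W 1) - ?r) + (qcomm phi q (G (k+1)) (W 1) - ?r) * W 0"
    unfolding comm_def Bdelta_def invq2 by (rule gen_DG)
  also have "\<dots> = (?r' * W 1 - W 1 * ?r') - (W 0 * ?r - ?r * W 0)"
    by (simp only: R3 R5 diff_self mult_zero_left mult_zero_right diff_zero add_0_right)
  also have "\<dots> = phi (rho q) * (comm (W (- int k - 1)) (W 1) - comm (W (int k + 1)) (W 1)
      - comm (W 0) (W (int k + 2)) + comm (W 0) (W (- int k)))"
    by (rule gen_rr)
  also have "\<dots> = 0" using a b d by simp
  finally have "phi q * comm DD (G (k+1)) = 0" .
  then show ?thesis using cancel[of q] q0 by simp
qed

abbreviation "XX \<equiv> Bt0 phi q (W 0) (W 1)"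
abbreviation "kap \<equiv> Bcoef q"

lemma Xpos: "XX (int n) = Ba0 phi q (W 0) (W 1) n" by (simp add: Bt0_def)
lemma Xneg: "XX (- int n - 1) = Ba1 phi q (W 0) (W 1) n" by (simp add: Bt0_def)

lemma Xrec: "XX (m + 1) = XX (m - 1) + phi kap * comm DD (XX m)"
proof (cases "m \<ge> 1")
  case True
  define j where "j = nat (m - 1)"
  have j: "m = int j + 1" using True unfolding j_def by simp
  have e1: "m + 1 = int (Suc (Suc j))" and e2: "m - 1 = int j" and e3: "m = int (Suc j)" using j by simp_all
  have x1: "XX (m + 1) = Ba0 phi q (W 0) (W 1) (Suc (Suc j))" unfolding e1 by (rule Xpos)
  have x2: "XX (m - 1) = Ba0 phi q (W 0) (W 1) j" unfolding e2 by (rule Xpos)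
  have x3: "XX m = Ba0 phi q (W 0) (W 1) (Suc j)" unfolding e3 by (rule Xpos)
  show ?thesis unfolding x1 x2 x3 by simp
next
  case False
  then consider "m = 0" | "m = -1" | "m \<le> -2" by linarith
  then show ?thesis
  proof cases
    case 1
    have e1: "m + 1 = int (Suc 0)" and e2: "m - 1 = - int 0 - 1" and e3: "m = int 0" using 1 by simp_all
    have x1: "XX (m + 1) = Ba0 phi q (W 0) (W 1) (Suc 0)" unfolding e1 by (rule Xpos)
    have x2: "XX (m - 1) = Ba1 phi q (W 0) (W 1) 0" unfolding e2 by (rule Xneg)
    have x3: "XX m = Ba0 phi q (W 0) (W 1) 0" unfolding e3 by (rule Xpos)
    show ?thesis unfolding x1 x2 x3 by simp
  next
    case 2
    have e1: "m + 1 = int 0" and e2: "m - 1 = - int (Suc 0) - 1" and e3: "m = - int 0 - 1" using 2 by simp_all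
    have x1: "XX (m + 1) = Ba0 phi q (W 0) (W 1) 0" unfolding e1 by (rule Xpos)
    have x2: "XX (m - 1) = Ba1 phi q (W 0) (W 1) (Suc 0)" unfolding e2 by (rule Xneg)
    have x3: "XX m = Ba1 phi q (W 0) (W 1) 0" unfolding e3 by (rule Xneg)
    show ?thesis unfolding x1 x2 x3 by simp
  next
    case 3
    define j where "j = nat (- m - 2)"
    have j: "m = - int j - 2" using 3 unfolding j_def by simp
    have e1: "m + 1 = - int j - 1" and e2: "m - 1 = - int (Suc (Suc j)) - 1" and e3: "m = - int (Suc j) - 1" using j by simp_all
    have x1: "XX (m + 1) = Ba1 phi q (W 0) (W 1) j" unfolding e1 by (rule Xneg)
    have x2: "XX (m - 1) = Ba1 phi q (W 0) (W 1) (Suc (Suc j))" unfolding e2 by (rule Xneg)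
    have x3: "XX m = Ba1 phi q (W 0) (W 1) (Suc j)" unfolding e3 by (rule Xneg)
    show ?thesis unfolding x1 x2 x3 by simp
  qed
qed


lemma Bt1X: "Bt1 phi q w0 w1 j = Bt0 phi q w0 w1 (- j - 1)"
  by (simp add: Bt0_def Bt1_def)

definition Y0 :: "nat \<Rightarrow> 'a" where
  "Y0 k = (\<Sum>l\<le>k. phi (of_nat (k choose l) * q powi (2 * int l - int k)) * XX (int k - 2 * int l))"
definition Y1 :: "nat \<Rightarrow> 'a" where
  "Y1 k = (\<Sum>l\<le>k. phi (of_nat (k choose l) * q powi (int k - 2 * int l)) * Bt1 phi q (W 0) (W 1) (int k - 2 * int l))"

lemma binom_step:
  "(\<Sum>l\<le>Suc k. phi (of_nat (Suc k choose l)) * f l) = (\<Sum>l\<le>k. phi (of_nat (k choose l)) * (f l + f (Suc l)))"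
proof -
  have A: "(\<Sum>l\<le>Suc k. phi (of_nat (k choose l)) * f l) = (\<Sum>l\<le>k. phi (of_nat (k choose l)) * f l)"
    by (simp add: binomial_eq_0)
  have B: "(\<Sum>l\<le>Suc k. phi (of_nat (k choose l)) * f l) = f 0 + (\<Sum>l\<le>k. phi (of_nat (k choose Suc l)) * f (Suc l))"
    by (simp only: sum.atMost_Suc_shift) simp
  have C: "(\<Sum>l\<le>Suc k. phi (of_nat (Suc k choose l)) * f l) = f 0 + ((\<Sum>l\<le>k. phi (of_nat (k choose l)) * f (Suc l)) + (\<Sum>l\<le>k. phi (of_nat (k choose Suc l)) * f (Suc l)))"
    by (simp only: sum.atMost_Suc_shift) (simp add: sum.distrib distrib_right)
  show ?thesis unfolding C using A B by (simp add: sum.distrib distrib_left)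
qed

lemma powi_m1: "q powi (a - 1) = inverse q * q powi a"
  using q0 by (simp add: power_int_diff field_simps)
lemma powi_p1: "q powi (a + 1) = q * q powi a"
  using q0 by (simp add: power_int_add field_simps)

lemma sum_rev: fixes h :: "nat \<Rightarrow> 'b::comm_monoid_add" shows "(\<Sum>l\<le>k. h l) = (\<Sum>l\<le>k. h (k - l))"
  using sum.atLeastAtMost_rev[of h 0 k] by (simp add: atMost_atLeast0)

lemma comm_sum: "comm d (sum f A) = (\<Sum>i\<in>A. comm d (f i))"
  by (simp add: comm_def sum_distrib_left sum_distrib_right sum_subtractf)

lemma gen_L1: "phi (inverse q * a) * (x' + phi kk * comm d x) + phi (q * a) * x'
   = phi bb * (phi a * x') + phi (inverse q * kk) * comm d (phi a * x)"
  unfolding comm_def by (simp add: nf)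

lemma gen_L2: "phi (q * a) * x0 + phi (inverse q * a) * (x0 + phi kk * comm d x)
   = phi bb * (phi a * (x0 + phi kk * comm d x)) - phi (q * kk) * comm d (phi a * x)"
  unfolding comm_def by (simp add: nf)

lemma gen_lin: "phi c * (phi bb * a + phi e * comm d b) = phi bb * (phi c * a) + phi e * comm d (phi c * b)"
  unfolding comm_def by (simp add: nf)
lemma gen_lin2: "phi c * (phi bb * a - phi e * comm d b) = phi bb * (phi c * a) - phi e * comm d (phi c * b)"
  unfolding comm_def by (simp add: nf)

lemma Y1_rev: "Y1 k = (\<Sum>l\<le>k. phi (of_nat (k choose l)) * (phi (q powi (2 * int l - int k)) * XX (int k - 2 * int l - 1)))"
proof -
  have "Y1 k = (\<Sum>l\<le>k. phi (of_nat (k choose (k - l)) * q powi (int k - 2 * int (k - l))) * Bt1 phi q (W 0) (W 1) (int k - 2 * int (k - l)))"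
    unfolding Y1_def by (rule sum_rev)
  also have "\<dots> = (\<Sum>l\<le>k. phi (of_nat (k choose l)) * (phi (q powi (2 * int l - int k)) * XX (int k - 2 * int l - 1)))"
  proof (rule sum.cong[OF refl])
    fix l assume "l \<in> {..k}"
    then have lk: "l \<le> k" by simp
    have i1: "int k - 2 * int (k - l) = 2 * int l - int k" using lk by (simp add: of_nat_diff)
    have i2: "- (2 * int l - int k) - 1 = int k - 2 * int l - 1" by simp
    show "phi (of_nat (k choose (k - l)) * q powi (int k - 2 * int (k - l))) * Bt1 phi q (W 0) (W 1) (int k - 2 * int (k - l))
        = phi (of_nat (k choose l)) * (phi (q powi (2 * int l - int k)) * XX (int k - 2 * int l - 1))"
      unfolding i1 Bt1X i2 binomial_symmetric[OF lk, symmetric] by (simp only: pm2)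
  qed
  finally show ?thesis .
qed

lemma Y0_rev: "Y0 k = (\<Sum>l\<le>k. phi (of_nat (k choose l)) * (phi (q powi (int k - 2 * int l)) * XX (2 * int l - int k)))"
proof -
  have "Y0 k = (\<Sum>l\<le>k. phi (of_nat (k choose (k - l)) * q powi (2 * int (k - l) - int k)) * XX (int k - 2 * int (k - l)))"
    unfolding Y0_def by (rule sum_rev)
  also have "\<dots> = (\<Sum>l\<le>k. phi (of_nat (k choose l)) * (phi (q powi (int k - 2 * int l)) * XX (2 * int l - int k)))"
  proof (rule sum.cong[OF refl])
    fix l assume "l \<in> {..k}"
    then have lk: "l \<le> k" by simp
    have i1: "int k - 2 * int (k - l) = 2 * int l - int k" using lk by (simp add: of_nat_diff)
    have i2: "2 * int (k - l) - int k = int k - 2 * int l" using lk by (simp add: of_nat_diff)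
    show "phi (of_nat (k choose (k - l)) * q powi (2 * int (k - l) - int k)) * XX (int k - 2 * int (k - l))
        = phi (of_nat (k choose l)) * (phi (q powi (int k - 2 * int l)) * XX (2 * int l - int k))"
      unfolding i1 i2 binomial_symmetric[OF lk, symmetric] by (simp only: pm2)
  qed
  finally show ?thesis .
qed

lemma L1: "Y0 (Suc k) = phi bb * Y1 k + phi (inverse q * kap) * comm DD (Y0 k)"
proof -
  define f where "f l = phi (q powi (2 * int l - int (Suc k))) * XX (int (Suc k) - 2 * int l)" for l
  have "Y0 (Suc k) = (\<Sum>l\<le>Suc k. phi (of_nat (Suc k choose l)) * f l)"
    unfolding Y0_def f_def by (simp only: pm2)
  also have "\<dots> = (\<Sum>l\<le>k. phi (of_nat (k choose l)) * (f l + f (Suc l)))" by (rule binom_step)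
  also have "\<dots> = (\<Sum>l\<le>k. phi (of_nat (k choose l)) * (phi bb * (phi (q powi (2 * int l - int k)) * XX (int k - 2 * int l - 1))
        + phi (inverse q * kap) * comm DD (phi (q powi (2 * int l - int k)) * XX (int k - 2 * int l))))"
  proof (rule sum.cong[OF refl])
    fix l
    have i: "2 * int l - int (Suc k) = (2 * int l - int k) - 1" "int (Suc k) - 2 * int l = (int k - 2 * int l) + 1"
       "2 * int (Suc l) - int (Suc k) = (2 * int l - int k) + 1" "int (Suc k) - 2 * int (Suc l) = (int k - 2 * int l) - 1"
      by simp_all
    have "f l + f (Suc l) = phi (inverse q * q powi (2 * int l - int k)) * (XX (int k - 2 * int l - 1) + phi kap * comm DD (XX (int k - 2 * int l)))
       + phi (q * q powi (2 * int l - int k)) * XX (int k - 2 * int l - 1)"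
      unfolding f_def i powi_m1 powi_p1 Xrec ..
    also have "\<dots> = phi bb * (phi (q powi (2 * int l - int k)) * XX (int k - 2 * int l - 1))
        + phi (inverse q * kap) * comm DD (phi (q powi (2 * int l - int k)) * XX (int k - 2 * int l))"
      by (rule gen_L1)
    finally show "phi (of_nat (k choose l)) * (f l + f (Suc l)) = phi (of_nat (k choose l)) * (phi bb * (phi (q powi (2 * int l - int k)) * XX (int k - 2 * int l - 1))
        + phi (inverse q * kap) * comm DD (phi (q powi (2 * int l - int k)) * XX (int k - 2 * int l)))" by simp
  qed
  also have "\<dots> = phi bb * Y1 k + phi (inverse q * kap) * comm DD (Y0 k)"
    unfolding gen_lin sum.distrib Y1_rev Y0_def comm_sum sum_distrib_left by (simp only: pm2)
  finally show ?thesis .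
qed


lemma L2: "Y1 (Suc k) = phi bb * Y0 k - phi (q * kap) * comm DD (Y1 k)"
proof -
  define g where "g l = phi (q powi (int (Suc k) - 2 * int l)) * XX (- (int (Suc k) - 2 * int l) - 1)" for l
  have "Y1 (Suc k) = (\<Sum>l\<le>Suc k. phi (of_nat (Suc k choose l)) * g l)"
    unfolding Y1_def g_def Bt1X by (simp only: pm2)
  also have "\<dots> = (\<Sum>l\<le>k. phi (of_nat (k choose l)) * (g l + g (Suc l)))" by (rule binom_step)
  also have "\<dots> = (\<Sum>l\<le>k. phi (of_nat (k choose l)) * (phi bb * (phi (q powi (int k - 2 * int l)) * XX (2 * int l - int k))
        - phi (q * kap) * comm DD (phi (q powi (int k - 2 * int l)) * Bt1 phi q (W 0) (W 1) (int k - 2 * int l))))"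
  proof (rule sum.cong[OF refl])
    fix l
    let ?m = "- (int k - 2 * int l) - 1"
    have i: "int (Suc k) - 2 * int l = (int k - 2 * int l) + 1"
       "- ((int k - 2 * int l) + 1) - 1 = ?m - 1"
       "int (Suc k) - 2 * int (Suc l) = (int k - 2 * int l) - 1"
       "- ((int k - 2 * int l) - 1) - 1 = ?m + 1"
      by simp_all
    have i2: "?m + 1 = 2 * int l - int k" by simp
    have "g l + g (Suc l) = phi (q * q powi (int k - 2 * int l)) * XX (?m - 1)
       + phi (inverse q * q powi (int k - 2 * int l)) * (XX (?m - 1) + phi kap * comm DD (XX ?m))"
      unfolding g_def i powi_m1 powi_p1 Xrec ..
    also have "\<dots> = phi bb * (phi (q powi (int k - 2 * int l)) * (XX (?m - 1) + phi kap * comm DD (XX ?m)))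
        - phi (q * kap) * comm DD (phi (q powi (int k - 2 * int l)) * XX ?m)"
      by (rule gen_L2)
    also have "\<dots> = phi bb * (phi (q powi (int k - 2 * int l)) * XX (2 * int l - int k))
        - phi (q * kap) * comm DD (phi (q powi (int k - 2 * int l)) * Bt1 phi q (W 0) (W 1) (int k - 2 * int l))"
      unfolding Xrec[symmetric] i2 Bt1X ..
    finally show "phi (of_nat (k choose l)) * (g l + g (Suc l)) = phi (of_nat (k choose l)) * (phi bb * (phi (q powi (int k - 2 * int l)) * XX (2 * int l - int k))
        - phi (q * kap) * comm DD (phi (q powi (int k - 2 * int l)) * Bt1 phi q (W 0) (W 1) (int k - 2 * int l)))" by simp
  qed
  also have "\<dots> = phi bb * Y0 k - phi (q * kap) * comm DD (Y1 k)"
    unfolding gen_lin2 sum_subtractf Y0_rev Y1_def comm_sum sum_distrib_left by (simp only: pm2)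
  finally show ?thesis .
qed


abbreviation "Gc \<equiv> Gconv phi q G"

definition S0 :: "nat \<Rightarrow> 'a" where
  "S0 n = (\<Sum>k\<le>n. phi (inverse bb ^ (k + 2)) * Gc (n - k) * Y0 k)"
definition S1 :: "nat \<Rightarrow> 'a" where
  "S1 n = (\<Sum>k\<le>n. phi (inverse bb ^ (k + 2)) * Gc (n - k) * Y1 k)"

lemma GcD: "Gc j * DD = DD * Gc j"
proof (cases j)
  case 0
  have "Gc 0 = phi (- (q - inverse q) * (qint q 2)^2)" by (simp add: Gconv_def)
  then show ?thesis using 0 phi_central by metis
next
  case (Suc i)
  then show ?thesis using DG[of i] by (simp add: Gconv_def comm_def)
qed

lemma gen_step:
  assumes cb: "c * b = 1" and gd: "g * d = d * g"
  shows "phi (c * p) * g * (phi b * y1 + phi e * comm d y0) = phi p * g * y1 + phi (c * e) * comm d (phi p * g * y0)"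
proof -
  have gd2: "g * (d * z) = d * (g * z)" for z by (metis gd mult.assoc)
  have "phi (c * p) * g * (phi b * y1 + phi e * comm d y0) = phi (c * b * p) * g * y1 + phi (c * e) * comm d (phi p * g * y0)"
    unfolding comm_def by (simp add: nf gd2)
  then show ?thesis using cb by simp
qed

lemma gen_step2:
  assumes cb: "c * b = 1" and gd: "g * d = d * g"
  shows "phi (c * p) * g * (phi b * y1 - phi e * comm d y0) = phi p * g * y1 - phi (c * e) * comm d (phi p * g * y0)"
proof -
  have gd2: "g * (d * z) = d * (g * z)" for z by (metis gd mult.assoc)
  have "phi (c * p) * g * (phi b * y1 - phi e * comm d y0) = phi (c * b * p) * g * y1 - phi (c * e) * comm d (phi p * g * y0)"
    unfolding comm_def by (simp add: nf gd2)
  then show ?thesis using cb by simp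
qed

lemma ibb: "inverse bb * bb = 1" using bnz by simp

lemma Y00: "Y0 0 = W 1" unfolding Y0_def by (simp add: Bt0_def)
lemma Y10: "Y1 0 = W 0" unfolding Y1_def by (simp add: Bt1_def)

lemma S0_step: "S0 (Suc n) = phi (inverse bb ^ 2) * (G (Suc n) * W 1) + S1 n + phi (inverse bb * (inverse q * kap)) * comm DD (S0 n)"
proof -
  have e0: "S0 (Suc n) = phi (inverse bb ^ (0+2)) * Gc (Suc n - 0) * Y0 0 + (\<Sum>k\<le>n. phi (inverse bb ^ (Suc k + 2)) * Gc (Suc n - Suc k) * Y0 (Suc k))"
    unfolding S0_def by (rule sum.atMost_Suc_shift)
  have e1: "phi (inverse bb ^ (0+2)) * Gc (Suc n - 0) * Y0 0 = phi (inverse bb ^ 2) * (G (Suc n) * W 1)"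
    unfolding Y00 by (simp add: Gconv_def mult.assoc power2_eq_square)
  have "(\<Sum>k\<le>n. phi (inverse bb ^ (Suc k + 2)) * Gc (Suc n - Suc k) * Y0 (Suc k))
     = (\<Sum>k\<le>n. phi (inverse bb ^ (k + 2)) * Gc (n - k) * Y1 k + phi (inverse bb * (inverse q * kap)) * comm DD (phi (inverse bb ^ (k + 2)) * Gc (n - k) * Y0 k))"
  proof (rule sum.cong[OF refl])
    fix k
    have p: "inverse bb ^ (Suc k + 2) = inverse bb * inverse bb ^ (k + 2)" by simp
    have g: "Suc n - Suc k = n - k" by simp
    show "phi (inverse bb ^ (Suc k + 2)) * Gc (Suc n - Suc k) * Y0 (Suc k) = phi (inverse bb ^ (k + 2)) * Gc (n - k) * Y1 k + phi (inverse bb * (inverse q * kap)) * comm DD (phi (inverse bb ^ (k + 2)) * Gc (n - k) * Y0 k)"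
      unfolding L1 p g by (rule gen_step[OF ibb GcD])
  qed
  also have "\<dots> = S1 n + phi (inverse bb * (inverse q * kap)) * comm DD (S0 n)"
    unfolding S0_def S1_def sum.distrib comm_sum sum_distrib_left ..
  finally show ?thesis unfolding e0 e1 by (simp only: add.assoc)
qed

lemma S1_step: "S1 (Suc n) = phi (inverse bb ^ 2) * (G (Suc n) * W 0) + (S0 n - phi (inverse bb * (q * kap)) * comm DD (S1 n))"
proof -
  have e0: "S1 (Suc n) = phi (inverse bb ^ (0+2)) * Gc (Suc n - 0) * Y1 0 + (\<Sum>k\<le>n. phi (inverse bb ^ (Suc k + 2)) * Gc (Suc n - Suc k) * Y1 (Suc k))"
    unfolding S1_def by (rule sum.atMost_Suc_shift)
  have e1: "phi (inverse bb ^ (0+2)) * Gc (Suc n - 0) * Y1 0 = phi (inverse bb ^ 2) * (G (Suc n) * W 0)"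
    unfolding Y10 by (simp add: Gconv_def mult.assoc power2_eq_square)
  have "(\<Sum>k\<le>n. phi (inverse bb ^ (Suc k + 2)) * Gc (Suc n - Suc k) * Y1 (Suc k))
     = (\<Sum>k\<le>n. phi (inverse bb ^ (k + 2)) * Gc (n - k) * Y0 k - phi (inverse bb * (q * kap)) * comm DD (phi (inverse bb ^ (k + 2)) * Gc (n - k) * Y1 k))"
  proof (rule sum.cong[OF refl])
    fix k
    have p: "inverse bb ^ (Suc k + 2) = inverse bb * inverse bb ^ (k + 2)" by simp
    have g: "Suc n - Suc k = n - k" by simp
    show "phi (inverse bb ^ (Suc k + 2)) * Gc (Suc n - Suc k) * Y1 (Suc k) = phi (inverse bb ^ (k + 2)) * Gc (n - k) * Y0 k - phi (inverse bb * (q * kap)) * comm DD (phi (inverse bb ^ (k + 2)) * Gc (n - k) * Y1 k)"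
      unfolding L2 p g by (rule gen_step2[OF ibb GcD])
  qed
  also have "\<dots> = S0 n - phi (inverse bb * (q * kap)) * comm DD (S1 n)"
    unfolding S0_def S1_def sum_subtractf comm_sum sum_distrib_left ..
  finally show ?thesis unfolding e0 e1 by simp
qed


lemma gen_DW1: assumes h: "w1 * a = a * w1"
  shows "comm (phi (inverse q * inverse q) * w0 * w1 - w1 * w0) a = - (w1 * comm w0 a - phi (inverse q * inverse q) * (comm w0 a * w1))"
proof -
  have "comm (phi (inverse q * inverse q) * w0 * w1 - w1 * w0) a - (- (w1 * comm w0 a - phi (inverse q * inverse q) * (comm w0 a * w1)))
     = phi (inverse q * inverse q) * (w0 * (w1 * a - a * w1)) + (a * w1 - w1 * a) * w0"
    unfolding comm_def by (simp add: nf)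
  then show ?thesis using h by simp
qed

lemma gen_DW0: assumes h: "w0 * a = a * w0"
  shows "comm (phi (inverse q * inverse q) * w0 * w1 - w1 * w0) a = phi (inverse q * inverse q) * (phi (q * q) * (comm a w1 * w0) - w0 * comm a w1)"
proof -
  have "comm (phi (inverse q * inverse q) * w0 * w1 - w1 * w0) a - phi (inverse q * inverse q) * (phi (q * q) * (comm a w1 * w0) - w0 * comm a w1)
     = w1 * (a * w0 - w0 * a) + phi (inverse q * inverse q) * ((w0 * a - a * w0) * w1)"
    unfolding comm_def by (simp add: nf)
  then show ?thesis using h by simp
qed

lemma comm_phi: "comm d (phi c * x) = phi c * comm d x"
  unfolding comm_def by (simp add: nf)

lemma fin:
  assumes c: "c \<noteq> 0" and sr: "s * r = - (c * c)" and cu: "c * c * u = s"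
    and P: "phi c * P = phi r * A - phi r * B - Z"
  shows "phi s * P + phi (- c) * B + phi u * (phi (- c) * (- Z)) = phi (- c) * A"
proof -
  have "phi c * (phi s * P + phi (- c) * B + phi u * (phi (- c) * (- Z)))
      = phi s * (phi c * P) - phi (c * c) * B + phi (c * c * u) * Z"
    by (simp add: nf)
  also have "\<dots> = phi (s * r) * A - phi (s * r) * B - phi s * Z - phi (c * c) * B + phi s * Z"
    unfolding P cu by (simp add: nf)
  also have "\<dots> = phi c * (phi (- c) * A)" unfolding sr by (simp add: nf)
  finally show ?thesis using c cancel by blast
qed

lemma q2b: "q^2 - inverse (q^2) = cc * bb"
  by (simp add: power2_eq_square algebra_simps)
lemma rho_eq: "rho q = - ((cc * bb)^2)" unfolding rho_def q2b ..
lemma kap_eq: "kap = q / (cc * (cc * bb))" unfolding Bcoef_def q2b by (simp add: mult.assoc)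

lemma gsc1: "(b::'f) \<noteq> 0 \<Longrightarrow> inverse b ^ 2 * (- ((c * b)^2)) = - (c * c)"
  by (simp add: field_simps power2_eq_square)
lemma gsc2: "b \<noteq> 0 \<Longrightarrow> c \<noteq> 0 \<Longrightarrow> (x::'f) \<noteq> 0 \<Longrightarrow> c * c * (inverse b * (inverse x * (x / (c * (c * b))))) = inverse b ^ 2"
  by (simp add: field_simps power2_eq_square)
lemma gsc3: "b \<noteq> 0 \<Longrightarrow> c \<noteq> 0 \<Longrightarrow> (x::'f) \<noteq> 0 \<Longrightarrow> c * c * (inverse b * (x * (x / (c * (c * b)))) * (inverse x * inverse x)) = inverse b ^ 2"
  by (simp add: field_simps power2_eq_square)

lemma sc1: "inverse bb ^ 2 * rho q = - (cc * cc)"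
  unfolding rho_eq using bnz by (rule gsc1)
lemma sc2: "cc * cc * (inverse bb * (inverse q * kap)) = inverse bb ^ 2"
  unfolding kap_eq using bnz c0nz q0 by (rule gsc2)
lemma sc3: "cc * cc * (inverse bb * (q * kap) * (inverse q * inverse q)) = inverse bb ^ 2"
  unfolding kap_eq using bnz c0nz q0 by (rule gsc3)


lemma tY: "(a::'a) + (b - phi u * (phi (- c) * Z)) = a + b + phi u * (phi (- c) * (- Z))"
  by (simp add: diff_conv_add_uminus add.assoc)

lemma gsc0: "(b::'f) \<noteq> 0 \<Longrightarrow> inverse b ^ 2 * (- c * b^2) = - c"
  by (simp add: field_simps power2_eq_square)

lemma main: "S0 n = phi (- cc) * W (int n + 1) \<and> S1 n = phi (- cc) * W (- int n)"
proof (induction n)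
  case 0
  have g0: "Gc 0 = phi (- cc * bb^2)" by (simp add: Gconv_def qint2)
  have e: "inverse bb ^ 2 * (- cc * bb^2) = - cc" using bnz by (rule gsc0)
  have "S0 0 = phi (inverse bb ^ 2) * Gc 0 * Y0 0" by (simp add: S0_def power2_eq_square)
  also have "\<dots> = phi (- cc) * W (int 0 + 1)" unfolding g0 Y00 pm1 e by simp
  moreover have "S1 0 = phi (inverse bb ^ 2) * Gc 0 * Y1 0" by (simp add: S1_def power2_eq_square)
  moreover have "\<dots> = phi (- cc) * W (- int 0)" unfolding g0 Y10 pm1 e by simp
  ultimately show ?case by simp
next
  case (Suc n)
  then have IH0: "S0 n = phi (- cc) * W (int n + 1)" and IH1: "S1 n = phi (- cc) * W (- int n)" by simp_all
  define F where "F = comm (W (- int n)) (W 1)"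
  have F2: "comm (W 0) (W (int n + 1)) = F" unfolding F_def by (rule F_eq)
  have h1: "W 1 * W (int n + 1) = W (int n + 1) * W 1" using R8[of 0 n] by (simp add: comm_def)
  have h0: "W 0 * W (- int n) = W (- int n) * W 0" using R7[of 0 n] by (simp add: comm_def)
  have DW1: "comm DD (W (int n + 1)) = - (W 1 * F - phi (inverse q * inverse q) * (F * W 1))"
    unfolding Bdelta_def invq2 gen_DW1[OF h1] F2 ..
  have DW0: "comm DD (W (- int n)) = phi (inverse q * inverse q) * (phi (q * q) * (F * W 0) - W 0 * F)"
    unfolding Bdelta_def invq2 gen_DW0[OF h0] F_def ..
  have P1: "phi cc * (G (Suc n) * W 1) = phi (rho q) * W (int n + 2) - phi (rho q) * W (- int n) - (W 1 * F - phi (inverse q * inverse q) * (F * W 1))"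
    using GW1[of n] unfolding F_def by (simp add: algebra_simps)
  have P0: "phi cc * (G (Suc n) * W 0) = phi (rho q) * W (- int n - 1) - phi (rho q) * W (int n + 1) - (phi (q * q) * (F * W 0) - W 0 * F)"
    using GW0[of n] unfolding F_def by (simp add: algebra_simps)
  have "S0 (Suc n) = phi (inverse bb ^ 2) * (G (Suc n) * W 1) + phi (- cc) * W (- int n)
     + phi (inverse bb * (inverse q * kap)) * (phi (- cc) * (- (W 1 * F - phi (inverse q * inverse q) * (F * W 1))))"
    unfolding S0_step IH0 IH1 comm_phi DW1 ..
  also have "\<dots> = phi (- cc) * W (int n + 2)"
    by (rule fin[OF c0nz sc1 sc2 P1])
  finally have A0: "S0 (Suc n) = phi (- cc) * W (int n + 2)" .
  have e2: "int (Suc n) + 1 = int n + 2" by simp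
  have A: "S0 (Suc n) = phi (- cc) * W (int (Suc n) + 1)" unfolding e2 by (rule A0)
  have "S1 (Suc n) = phi (inverse bb ^ 2) * (G (Suc n) * W 0) + (phi (- cc) * W (int n + 1)
     - phi (inverse bb * (q * kap)) * (phi (- cc) * (phi (inverse q * inverse q) * (phi (q * q) * (F * W 0) - W 0 * F))))"
    unfolding S1_step IH0 IH1 comm_phi DW0 ..
  also have "\<dots> = phi (inverse bb ^ 2) * (G (Suc n) * W 0) + phi (- cc) * W (int n + 1)
     + phi (inverse bb * (q * kap) * (inverse q * inverse q)) * (phi (- cc) * (- (phi (q * q) * (F * W 0) - W 0 * F)))"
  proof -
    have X: "phi (inverse bb * (q * kap)) * (phi (- cc) * (phi (inverse q * inverse q) * (phi (q * q) * (F * W 0) - W 0 * F)))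
       = phi (inverse bb * (q * kap) * (inverse q * inverse q)) * (phi (- cc) * (phi (q * q) * (F * W 0) - W 0 * F))"
      by (simp only: pm2 mult_ac)
    show ?thesis unfolding X by (rule tY)
  qed
  also have "\<dots> = phi (- cc) * W (- int n - 1)"
    by (rule fin[OF c0nz sc1 sc3 P0])
  finally have B0: "S1 (Suc n) = phi (- cc) * W (- int n - 1)" .
  have e3: "- int (Suc n) = - int n - 1" by simp
  have B: "S1 (Suc n) = phi (- cc) * W (- int (Suc n))" unfolding e3 by (rule B0)
  from A B show ?case ..
qed

lemma gen_pull: "phi (a * bp) * g * x = phi bp * g * (phi a * x)"
  by (simp add: nf)

lemma bpow: "qint q 2 powi (- int k - 2) = inverse bb ^ (k + 2)"
proof -
  have e: "- int k - 2 = - int (k + 2)" by simp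
  show ?thesis unfolding qint2 e by (simp only: power_int_minus power_int_of_nat power_inverse)
qed

lemma gsc4: "(c::'f) \<noteq> 0 \<Longrightarrow> - inverse c * - c = 1" by simp

lemma cancel_cc: "phi (- inverse cc) * (phi (- cc) * x) = x"
proof -
  have "phi (- inverse cc) * (phi (- cc) * x) = phi (- inverse cc * - cc) * x" by (rule pm2)
  also have "- inverse cc * - cc = 1" using c0nz by (rule gsc4)
  finally show ?thesis by simp
qed

lemma final0: "W (int n + 1) = phi (- inverse cc) *
           (\<Sum>k\<le>n. \<Sum>l\<le>k. phi (of_nat (k choose l) * q powi (2 * int l - int k)
               * (qint q 2) powi (- int k - 2)) * Gconv phi q G (n - k)
               * Bt0 phi q (W 0) (W 1) (int k - 2 * int l))"
proof -
  have "(\<Sum>k\<le>n. \<Sum>l\<le>k. phi (of_nat (k choose l) * q powi (2 * int l - int k)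
               * (qint q 2) powi (- int k - 2)) * Gconv phi q G (n - k)
               * Bt0 phi q (W 0) (W 1) (int k - 2 * int l)) = S0 n"
    unfolding S0_def Y0_def bpow gen_pull sum_distrib_left ..
  also have "\<dots> = phi (- cc) * W (int n + 1)" using main by blast
  finally show ?thesis using cancel_cc by metis
qed

lemma final1: "W (- int n) = phi (- inverse cc) *
           (\<Sum>k\<le>n. \<Sum>l\<le>k. phi (of_nat (k choose l) * q powi (int k - 2 * int l)
               * (qint q 2) powi (- int k - 2)) * Gconv phi q G (n - k)
               * Bt1 phi q (W 0) (W 1) (int k - 2 * int l))"
proof -
  have "(\<Sum>k\<le>n. \<Sum>l\<le>k. phi (of_nat (k choose l) * q powi (int k - 2 * int l)
               * (qint q 2) powi (- int k - 2)) * Gconv phi q G (n - k)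
               * Bt1 phi q (W 0) (W 1) (int k - 2 * int l)) = S1 n"
    unfolding S1_def Y1_def bpow gen_pull sum_distrib_left ..
  also have "\<dots> = phi (- cc) * W (- int n)" using main by blast
  finally show ?thesis using cancel_cc by metis
qed

end

theorem proposition12p4:
  fixes phi :: "'f::field \<Rightarrow> 'a::ring_1" and q :: 'f
    and W :: "int \<Rightarrow> 'a" and G Gt :: "nat \<Rightarrow> 'a" and n :: nat
  assumes "alg_map phi"
    and "not_root_of_unity q"
    and "Oq_rels phi q W G Gt"
  shows "(W (int n + 1) = phi (- inverse (q - inverse q)) *
           (\<Sum>k\<le>n. \<Sum>l\<le>k. phi (of_nat (k choose l) * q powi (2 * int l - int k)
               * (qint q 2) powi (- int k - 2)) * Gconv phi q G (n - k)
               * Bt0 phi q (W 0) (W 1) (int k - 2 * int l))) \<and>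
         (W (- int n) = phi (- inverse (q - inverse q)) *
           (\<Sum>k\<le>n. \<Sum>l\<le>k. phi (of_nat (k choose l) * q powi (int k - 2 * int l)
               * (qint q 2) powi (- int k - 2)) * Gconv phi q G (n - k)
               * Bt1 phi q (W 0) (W 1) (int k - 2 * int l)))"
proof -
  interpret oq phi q W G Gt using assms by (rule oq.intro)
  show ?thesis using final0 final1 by blast
qed

end
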